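(* For every integer $k\ge2$ and every item sequence $I\in(0,1]^n$, $NFD_k(I)\le\lambda_k\cdot OPT_k(I)+k$.
   Context: Define $\pi_1=2$, $\pi_{i+1}=\pi_i(\pi_i-1)+1$ for $i\ge1$, and $\lambda_j=\sum_{i=1}^j\max\{\frac{1}{\pi_i-1},\frac1j\}$ for $j\ge1$. The $k$-cardinality constrained bin packing problem: an item sequence $I\in(0,1]^n$ must be packed into bins of capacity $1$ with at most $k$ items per bin; $OPT_k(I)$ is the minimum number of non-empty bins, $ALG(I)$ the number used by $ALG$. Algorithm $NFD_k$: sort the items in non-increasing order, then process them in this order with a single open bin: pack the current item into the open bin if it fits (load stays $\le1$) and the bin contains fewer than $k$ items; otherwise close the open bin permanently and pack the item into a new bin. *)

theory Defs
  imports Complex_Main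
begin

(* pi_1 = 2, pi_{i+1} = pi_i (pi_i - 1) + 1; index 0 is unused *)
fun pi_seq :: "nat \<Rightarrow> nat" where
  "pi_seq 0 = 1"
| "pi_seq (Suc 0) = 2"
| "pi_seq (Suc (Suc i)) = pi_seq (Suc i) * (pi_seq (Suc i) - 1) + 1"

definition lambda_seq :: "nat \<Rightarrow> real" where
  "lambda_seq j = (\<Sum>i=1..j. max (1 / (real (pi_seq i) - 1)) (1 / real j))"

definition valid_packing :: "nat \<Rightarrow> real list \<Rightarrow> (nat \<Rightarrow> nat) \<Rightarrow> bool" where
  "valid_packing k I f \<longleftrightarrow>
     (\<forall>b. (\<Sum>i\<in>{i. i < length I \<and> f i = b}. I ! i) \<le> 1
          \<and> card {i. i < length I \<and> f i = b} \<le> k)"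

definition bins_used :: "real list \<Rightarrow> (nat \<Rightarrow> nat) \<Rightarrow> nat" where
  "bins_used I f = card (f ` {..<length I})"

definition OPT :: "nat \<Rightarrow> real list \<Rightarrow> nat" where
  "OPT k I = (LEAST m. \<exists>f. valid_packing k I f \<and> bins_used I f = m)"

(* Next Fit with a single open bin of current load and item count c;
   returns the number of additional bins opened *)
fun nf_aux :: "nat \<Rightarrow> real \<Rightarrow> nat \<Rightarrow> real list \<Rightarrow> nat" where
  "nf_aux k load c [] = 0"
| "nf_aux k load c (x # xs) =
     (if load + x \<le> 1 \<and> c < k then nf_aux k (load + x) (Suc c) xs
      else Suc (nf_aux k x 1 xs))"

definition NF :: "nat \<Rightarrow> real list \<Rightarrow> nat" where
  "NF k xs = (case xs of [] \<Rightarrow> 0 | x # ys \<Rightarrow> Suc (nf_aux k x 1 ys))"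

definition NFD :: "nat \<Rightarrow> real list \<Rightarrow> nat" where
  "NFD k I = NF k (rev (sort I))"

end

theory Submission
  imports Defs
begin

definition tcl :: "real \<Rightarrow> nat" where "tcl x = nat \<lfloor>1/x\<rfloor>"
definition cl :: "nat \<Rightarrow> real \<Rightarrow> nat" where "cl k x = min (tcl x) k"
definition wt :: "nat \<Rightarrow> real \<Rightarrow> real" where "wt k x = 1 / real (cl k x)"
definition MM :: "nat \<Rightarrow> nat \<Rightarrow> real" where
  "MM k i = max (1 / (real (pi_seq i) - 1)) (1 / real k)"

lemma tcl_ge1: "0 < x \<Longrightarrow> x \<le> 1 \<Longrightarrow> 1 \<le> tcl x"
  unfolding tcl_def by (simp add: le_nat_floor)

lemma tcl_le: "0 < x \<Longrightarrow> real (tcl x) \<le> 1/x"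
  unfolding tcl_def by simp

lemma tcl_gt: "0 < x \<Longrightarrow> 1/x < real (tcl x) + 1"
  unfolding tcl_def by linarith

lemma tcl_mono: "0 < y \<Longrightarrow> y \<le> x \<Longrightarrow> tcl x \<le> tcl y"
  unfolding tcl_def by (intro nat_mono floor_mono) (simp add: frac_le)

lemma x_le_inv_tcl: "0 < x \<Longrightarrow> x \<le> 1 \<Longrightarrow> x \<le> 1 / real (tcl x)"
proof -
  assume a: "0 < x" "x \<le> 1"
  have "real (tcl x) \<le> 1/x" using tcl_le a by auto
  moreover have "1 \<le> real (tcl x)" using tcl_ge1[OF a] by simp
  ultimately show ?thesis using a by (simp add: field_simps)
qed

lemma x_gt_inv_tcl: "0 < x \<Longrightarrow> 1 / (real (tcl x) + 1) < x"
proof -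
  assume a: "0 < x"
  have "1/x < real (tcl x) + 1" using tcl_gt a by auto
  then show ?thesis using a by (simp add: field_simps)
qed

lemma cl_ge1: "0 < x \<Longrightarrow> x \<le> 1 \<Longrightarrow> 1 \<le> k \<Longrightarrow> 1 \<le> cl k x"
  unfolding cl_def using tcl_ge1 by simp

lemma x_le_inv_cl: "0 < x \<Longrightarrow> x \<le> 1 \<Longrightarrow> 1 \<le> k \<Longrightarrow> x \<le> 1 / real (cl k x)"
proof -
  assume a: "0 < x" "x \<le> 1" "1 \<le> k"
  have "x \<le> 1 / real (tcl x)" using x_le_inv_tcl a by auto
  moreover have "1 \<le> real (cl k x)" using cl_ge1 a by simp
  moreover have "real (cl k x) \<le> real (tcl x)" unfolding cl_def by simp
  ultimately show ?thesis using a by (smt (verit) frac_le)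
qed

lemma cl_mono: "0 < y \<Longrightarrow> y \<le> x \<Longrightarrow> cl k x \<le> cl k y"
  unfolding cl_def using tcl_mono by (meson min.mono order_refl)

lemma wt_pos: "0 \<le> wt k x"
  unfolding wt_def by simp

lemma nf_bound:
  assumes "sorted_wrt (\<ge>) xs" "\<forall>y\<in>set xs. 0 < y \<and> y \<le> 1" "1 \<le> f" "f \<le> g" "g \<le> k"
    "\<forall>y\<in>set xs. g \<le> cl k y"
    "g = f \<longrightarrow> (real c / real f \<le> W \<and> load \<le> real c / real f)" "0 \<le> W"
  shows "real (nf_aux k load c xs) \<le> W + sum_list (map (wt k) xs) + real k - real f"
  using assms
proof (induction xs arbitrary: load c W f g)
  case Nil
  then show ?case by simp
next
  case (Cons y ys)
  have y01: "0 < y" "y \<le> 1" using Cons.prems(2) by auto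
  have k1: "1 \<le> k" using Cons.prems by linarith
  have gy: "g \<le> cl k y" using Cons.prems(6) by auto
  have ycl: "y \<le> 1 / real (cl k y)" using x_le_inv_cl y01 k1 by auto
  have wy: "wt k y = 1 / real (cl k y)" unfolding wt_def by simp
  have clk: "cl k y \<le> k" unfolding cl_def by simp
  have mono: "\<forall>z\<in>set ys. cl k y \<le> cl k z"
    using Cons.prems(1,2) cl_mono by auto
  have sys: "sorted_wrt (\<ge>) ys" using Cons.prems(1) by simp
  have rys: "\<forall>z\<in>set ys. 0 < z \<and> z \<le> 1" using Cons.prems(2) by simp
  show ?case
  proof (cases "load + y \<le> 1 \<and> c < k")
    case True
    have inv: "cl k y = f \<longrightarrow> (real (Suc c) / real f \<le> W + wt k y \<and> load + y \<le> real (Suc c) / real f)"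
    proof
      assume e: "cl k y = f"
      then have "g = f" using gy Cons.prems(4) by simp
      then have h: "real c / real f \<le> W" "load \<le> real c / real f" using Cons.prems(7) by auto
      have "real (Suc c) / real f = real c / real f + 1 / real f" by (simp add: add_divide_distrib)
      then show "real (Suc c) / real f \<le> W + wt k y \<and> load + y \<le> real (Suc c) / real f"
        using h wy ycl e by simp
    qed
    have "real (nf_aux k (load + y) (Suc c) ys) \<le> (W + wt k y) + sum_list (map (wt k) ys) + real k - real f"
      using Cons.IH[OF sys rys Cons.prems(3), of "cl k y" "Suc c" "W + wt k y" "load + y"]
        Cons.prems(4) gy clk mono inv Cons.prems(8) wt_pos[of k y] by simp
    then show ?thesis using True by simp
  next
    case False
    have c1: "1 \<le> cl k y" using cl_ge1 y01 k1 by simp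
    have IH: "real (nf_aux k y 1 ys) \<le> wt k y + sum_list (map (wt k) ys) + real k - real (cl k y)"
      using Cons.IH[OF sys rys c1, of "cl k y" 1 "wt k y" y] clk mono wy ycl wt_pos[of k y] by simp
    have key: "1 + real f - real (cl k y) \<le> W"
    proof (cases "cl k y = f")
      case False
      then have "f < cl k y" using gy Cons.prems(4) by simp
      then show ?thesis using Cons.prems(8) by simp
    next
      case e: True
      then have "g = f" using gy Cons.prems(4) by simp
      then have h: "real c / real f \<le> W" "load \<le> real c / real f" using Cons.prems(7) by auto
      have fpos: "0 < real f" using Cons.prems(3) by simp
      have "1 \<le> W"
      proof (cases "c < k")
        case True
        then have "1 < load + y" using False by simp
        then have "1 < real c / real f + 1 / real f" using h ycl e by simp
        then have "real f < real c + 1" using fpos by (simp add: field_simps)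
        then have "real f \<le> real c" by simp
        then have "1 \<le> real c / real f" using fpos by simp
        then show ?thesis using h by simp
      next
        case False
        then have "real f \<le> real c" using Cons.prems(4,5) by simp
        then have "1 \<le> real c / real f" using fpos by simp
        then show ?thesis using h by simp
      qed
      then show ?thesis using e by simp
    qed
    have "nf_aux k load c (y # ys) = Suc (nf_aux k y 1 ys)" using False by auto
    then show ?thesis using IH key by simp
  qed
qed

lemma pi_ge2: "1 \<le> j \<Longrightarrow> 2 \<le> pi_seq j"
proof (induction j)
  case 0 then show ?case by simp
next
  case (Suc j)
  show ?case
  proof (cases j)
    case 0 then show ?thesis by simp
  next
    case (Suc i)
    then have "2 \<le> pi_seq j" using Suc.IH by simp
    then have "2 * 1 \<le> pi_seq j * (pi_seq j - 1)" by (intro mult_mono) auto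
    then show ?thesis using Suc \<open>2 \<le> pi_seq j\<close> by simp
  qed
qed

lemma pi_Suc: "1 \<le> j \<Longrightarrow> real (pi_seq (Suc j)) - 1 = real (pi_seq j) * (real (pi_seq j) - 1)"
proof -
  assume j: "1 \<le> j"
  then obtain i where i: "j = Suc i" by (cases j) auto
  have "2 \<le> pi_seq j" using pi_ge2 j by simp
  then have "real (pi_seq j - 1) = real (pi_seq j) - 1" by (simp add: of_nat_diff)
  then show ?thesis using i by simp
qed

lemma MM_ge: "1 / real k \<le> MM k i" unfolding MM_def by simp

lemma sum_MM_ge: "real (b - a) / real k \<le> (\<Sum>i=a..<b. MM k i)"
proof -
  have "(\<Sum>i=a..<b. 1 / real k) \<le> (\<Sum>i=a..<b. MM k i)" by (rule sum_mono) (rule MM_ge)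
  then show ?thesis by simp
qed

lemma bin_bound:
  fixes x :: "'a \<Rightarrow> real"
  assumes "finite S" "card S = m" "\<forall>i\<in>S. 0 < x i \<and> x i \<le> 1"
    "sum x S \<le> 1 / (real (pi_seq j) - 1)" "1 \<le> j" "1 \<le> k"
  shows "(\<Sum>i\<in>S. wt k (x i)) \<le> (\<Sum>i=j..<j+m. MM k i)"
  using assms
proof (induction m arbitrary: S j)
  case 0
  then show ?case by simp
next
  case (Suc m)
  have Sne: "S \<noteq> {}" using Suc.prems(2) by auto
  define mx where "mx = Max (x ` S)"
  have "mx \<in> x ` S" unfolding mx_def using Suc.prems(1) Sne by simp
  then obtain a where a: "a \<in> S" "x a = mx" by auto
  have amax: "\<forall>i\<in>S. x i \<le> x a" using a Suc.prems(1) unfolding mx_def by simp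
  have xpos: "\<forall>i\<in>S. 0 \<le> x i" using Suc.prems(3) by auto
  have xa01: "0 < x a" "x a \<le> 1" using a Suc.prems(3) by auto
  define p where "p = real (pi_seq j)"
  have p2: "2 \<le> p" unfolding p_def using pi_ge2 Suc.prems(5) by (metis numeral_le_real_of_nat_iff)
  have pS: "real (pi_seq (Suc j)) - 1 = p * (p - 1)" unfolding p_def using pi_Suc Suc.prems(5) by simp
  have sumS: "sum x S \<le> 1 / (p - 1)" using Suc.prems(4) unfolding p_def by simp
  have xa_le: "x a \<le> sum x S" using member_le_sum[of a S x] a xpos Suc.prems(1) by auto
  define T where "T = tcl (x a)"
  have Tgt: "1 / (real T + 1) < x a" unfolding T_def using x_gt_inv_tcl xa01 by simp
  have Tmono: "\<forall>i\<in>S. T \<le> tcl (x i)" unfolding T_def using tcl_mono amax Suc.prems(3) by auto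
  have wS: "(\<Sum>i\<in>S. wt k (x i)) = wt k (x a) + (\<Sum>i\<in>S-{a}. wt k (x i))"
    using a Suc.prems(1) by (simp add: sum.remove)
  have rhs: "(\<Sum>i=j..<j+Suc m. MM k i) = MM k j + (\<Sum>i=Suc j..<Suc j+m. MM k i)"
    by (simp add: sum.atLeast_Suc_lessThan)
  show ?case
  proof (cases "k \<le> T")
    case True
    have "\<forall>i\<in>S. wt k (x i) = 1 / real k"
      using Tmono True unfolding wt_def cl_def by (metis min.absorb2 order_trans)
    then have "(\<Sum>i\<in>S. wt k (x i)) = real (Suc m) / real k" using Suc.prems(2) by simp
    also have "\<dots> \<le> (\<Sum>i=j..<j+Suc m. MM k i)" using sum_MM_ge[of "j+Suc m" j k] by simp
    finally show ?thesis .
  next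
    case False
    then have Tk: "T < k" by simp
    have wa: "wt k (x a) = 1 / real T" unfolding wt_def cl_def T_def[symmetric] using Tk by simp
    have "1 / (real T + 1) < 1 / (p - 1)" using Tgt xa_le sumS by linarith
    then have "p - 1 < real T + 1" using p2 by (simp add: field_simps)
    then have "real (pi_seq j) < real (T + 2)" unfolding p_def by simp
    then have "pi_seq j \<le> T + 1" by linarith
    then have "real (pi_seq j) \<le> real T + 1" by linarith
    then consider "T + 1 = pi_seq j" | "pi_seq j \<le> T" by linarith
    then consider "real T = p - 1" | "p \<le> real T"
      unfolding p_def by (metis add_diff_cancel_right' of_nat_1 of_nat_add of_nat_le_iff)
    then show ?thesis
    proof cases
      case 1
      have "sum x (S - {a}) = sum x S - x a" using a Suc.prems(1) by (simp add: sum_diff1)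
      also have "\<dots> < 1 / (p - 1) - 1 / p" using sumS Tgt 1 by simp
      also have "\<dots> = 1 / (real (pi_seq (Suc j)) - 1)" using pS p2 by (simp add: field_simps)
      finally have rest: "sum x (S - {a}) \<le> 1 / (real (pi_seq (Suc j)) - 1)" by simp
      have IH: "(\<Sum>i\<in>S-{a}. wt k (x i)) \<le> (\<Sum>i=Suc j..<Suc j+m. MM k i)"
        using Suc.IH[of "S - {a}" "Suc j"] Suc.prems a rest by simp
      have "wt k (x a) \<le> MM k j" using wa 1 unfolding MM_def p_def by simp
      then show ?thesis using wS rhs IH by simp
    next
      case 2
      define B where "B = {i\<in>S. tcl (x i) < k}"
      have aB: "a \<in> B" unfolding B_def using a Tk T_def by simp
      have finB: "finite B" unfolding B_def using Suc.prems(1) by simp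
      have BS: "B \<subseteq> S" unfolding B_def by auto
      have split: "(\<Sum>i\<in>S. wt k (x i)) = (\<Sum>i\<in>B. wt k (x i)) + (\<Sum>i\<in>S-B. wt k (x i))"
        using BS Suc.prems(1) by (metis add.commute sum.subset_diff)
      have cardS: "card S = card B + card (S - B)"
        using BS Suc.prems(1) by (metis card_Diff_subset finB card_mono le_add_diff_inverse)
      have small: "(\<Sum>i\<in>S-B. wt k (x i)) = real (card (S - B)) / real k"
      proof -
        have "\<forall>i\<in>S-B. wt k (x i) = 1 / real k" unfolding B_def wt_def cl_def by (auto simp: min_def)
        then show ?thesis by simp
      qed
      have wB: "\<forall>i\<in>B. wt k (x i) = 1 / real (tcl (x i))" unfolding B_def wt_def cl_def by auto
      have TB: "\<forall>i\<in>B. p \<le> real (tcl (x i))" using Tmono 2 BS by force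
      have each1: "\<forall>i\<in>B. wt k (x i) \<le> 1 / p"
      proof
        fix i assume "i \<in> B"
        then show "wt k (x i) \<le> 1 / p" using wB TB p2 by (simp add: frac_le)
      qed
      have each2: "\<forall>i\<in>B. wt k (x i) \<le> (1 + 1/p) * x i"
      proof
        fix i assume iB: "i \<in> B"
        define t where "t = real (tcl (x i))"
        have xi: "0 < x i" using iB BS Suc.prems(3) by auto
        have tp: "p \<le> t" using TB iB t_def by simp
        have tgt: "1 / (t + 1) < x i" using x_gt_inv_tcl xi t_def by simp
        have "wt k (x i) = (1 + 1/t) * (1 / (t+1))" using wB iB t_def tp p2 by (simp add: field_simps)
        also have "\<dots> \<le> (1 + 1/t) * x i" using tgt tp p2 by (intro mult_left_mono) auto
        also have "\<dots> \<le> (1 + 1/p) * x i" using tp p2 xi by (intro mult_right_mono) (auto simp: frac_le)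
        finally show "wt k (x i) \<le> (1 + 1/p) * x i" .
      qed
      have mB: "real (Suc m) = real (card B) + real (card (S - B))" using cardS Suc.prems(2) by simp
      have cB1: "1 \<le> card B" using aB finB by (metis One_nat_def Suc_leI card_gt_0_iff empty_iff)
      show ?thesis
      proof (cases "card B = 1")
        case True
        have "(\<Sum>i\<in>B. wt k (x i)) \<le> (\<Sum>i\<in>B. 1 / p)" using each1 by (intro sum_mono) auto
        also have "\<dots> = 1 / p" using True by simp
        also have "\<dots> \<le> 1 / (p - 1)" using p2 by (intro divide_left_mono) auto
        also have "\<dots> \<le> MM k j" unfolding MM_def p_def[symmetric] by simp
        finally have b1: "(\<Sum>i\<in>B. wt k (x i)) \<le> MM k j" .
        have "(\<Sum>i\<in>S-B. wt k (x i)) \<le> (\<Sum>i=Suc j..<Suc j+m. MM k i)"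
        proof -
          have e: "card (S - B) = m" using mB True by simp
          show ?thesis using small sum_MM_ge[of "Suc j + m" "Suc j" k] e by (simp only: add_diff_cancel_left')
        qed
        then show ?thesis using split b1 rhs by simp
      next
        case False
        then have cB2: "2 \<le> card B" using cB1 by simp
        then obtain m' where m': "m = Suc m'" using cardS Suc.prems(2) by (cases m) auto
        have "(\<Sum>i\<in>B. wt k (x i)) \<le> (\<Sum>i\<in>B. (1 + 1/p) * x i)" using each2 by (intro sum_mono) auto
        also have "\<dots> = (1 + 1/p) * sum x B" by (simp add: sum_distrib_left)
        also have "\<dots> \<le> (1 + 1/p) * sum x S"
          using sum_mono2[OF Suc.prems(1) BS] xpos p2 by (intro mult_left_mono) auto
        also have "\<dots> \<le> (1 + 1/p) * (1 / (p - 1))" using sumS p2 by (intro mult_left_mono) auto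
        also have "\<dots> = 1 / (p - 1) + 1 / (real (pi_seq (Suc j)) - 1)" unfolding pS
        proof -
          have nz: "p \<noteq> 0" "p - 1 \<noteq> 0" using p2 by auto
          show "(1 + 1 / p) * (1 / (p - 1)) = 1 / (p - 1) + 1 / (p * (p - 1))"
          proof -
            have a1: "1 / (p - 1) = p / (p * (p - 1))" using nz by simp
            have a2: "1 + 1 / p = (p + 1) / p" using nz by (simp add: field_simps)
            have "(1 + 1 / p) * (1 / (p - 1)) = (p + 1) / (p * (p - 1))" unfolding a2 by simp
            also have "\<dots> = p / (p * (p - 1)) + 1 / (p * (p - 1))" by (simp add: add_divide_distrib)
            finally show ?thesis unfolding a1 .
          qed
        qed
        also have "\<dots> \<le> MM k j + MM k (Suc j)" unfolding MM_def p_def by simp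
        finally have b2: "(\<Sum>i\<in>B. wt k (x i)) \<le> MM k j + MM k (Suc j)" .
        have rhs2: "(\<Sum>i=Suc j..<Suc j+m. MM k i) = MM k (Suc j) + (\<Sum>i=Suc (Suc j)..<Suc (Suc j)+m'. MM k i)"
        proof -
          have r: "{Suc j..<Suc j+m} = insert (Suc j) {Suc (Suc j)..<Suc (Suc j)+m'}" using m' by auto
          show ?thesis unfolding r by (subst sum.insert) auto
        qed
        have "(\<Sum>i\<in>S-B. wt k (x i)) \<le> (\<Sum>i=Suc (Suc j)..<Suc (Suc j)+m'. MM k i)"
        proof -
          have "real (card (S - B)) \<le> real m'" using mB m' cB2 by simp
          then have "real (card (S - B)) / real k \<le> real m' / real k" by (simp add: divide_right_mono)
          then show ?thesis using small sum_MM_ge[of "Suc (Suc j) + m'" "Suc (Suc j)" k]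
            by (simp only: add_diff_cancel_left')
        qed
        then show ?thesis using split b2 rhs rhs2 by simp
      qed
    qed
  qed
qed

lemma sum_list_insort: "sum_list (map w (insort x xs)) = (w x :: real) + sum_list (map w xs)"
  by (induction xs) auto

lemma sum_list_sort: "sum_list (map w (sort xs)) = (sum_list (map w xs) :: real)"
  by (induction xs) (auto simp: sum_list_insort)

lemma nfd_bound:
  assumes "1 \<le> k" "\<forall>x\<in>set I. 0 < x \<and> x \<le> 1"
  shows "real (NFD k I) \<le> sum_list (map (wt k) I) + real k"
proof -
  define L where "L = rev (sort I)"
  have sL: "sorted_wrt (\<ge>) L" unfolding L_def by (simp add: sorted_wrt_rev)
  have setL: "set L = set I" unfolding L_def by simp
  have sumL: "sum_list (map (wt k) L) = sum_list (map (wt k) I)"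
    unfolding L_def by (simp add: rev_map[symmetric] sum_list_sort)
  have NL: "NFD k I = NF k L" unfolding NFD_def L_def by simp
  show ?thesis
  proof (cases L)
    case Nil
    have "0 \<le> sum_list (map (wt k) I)" by (rule sum_list_nonneg) (auto simp: wt_pos)
    then show ?thesis using NL Nil by (simp add: NF_def)
  next
    case (Cons x ys)
    have x01: "0 < x" "x \<le> 1" using assms(2) setL Cons by auto
    have sys: "sorted_wrt (\<ge>) ys" using sL Cons by simp
    have rys: "\<forall>z\<in>set ys. 0 < z \<and> z \<le> 1" using assms(2) setL Cons by auto
    have mono: "\<forall>z\<in>set ys. cl k x \<le> cl k z" using sL Cons rys cl_mono by auto
    have c1: "1 \<le> cl k x" using cl_ge1 x01 assms(1) by simp
    have ck: "cl k x \<le> k" unfolding cl_def by simp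
    have wx: "wt k x = 1 / real (cl k x)" unfolding wt_def by simp
    have xc: "x \<le> 1 / real (cl k x)" using x_le_inv_cl x01 assms(1) by simp
    have "real (nf_aux k x 1 ys) \<le> wt k x + sum_list (map (wt k) ys) + real k - real (cl k x)"
      using nf_bound[OF sys rys c1 order_refl ck mono, of 1 "wt k x" x] wx xc wt_pos[of k x] by simp
    then have "real (NF k L) \<le> sum_list (map (wt k) L) + real k" using Cons c1 by (simp add: NF_def)
    then show ?thesis using NL sumL by simp
  qed
qed

theorem theorem11:
  fixes k :: nat and I :: "real list"
  assumes "k \<ge> 2"
    and "\<forall>x\<in>set I. 0 < x \<and> x \<le> 1"
  shows "real (NFD k I) \<le> lambda_seq k * real (OPT k I) + real k"
proof -
  have k1: "1 \<le> k" using assms(1) by simp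
  define n where "n = length I"
  have ex: "\<exists>f. valid_packing k I f \<and> bins_used I f = bins_used I id"
  proof (intro exI conjI)
    show "valid_packing k I id" unfolding valid_packing_def
    proof
      fix b
      show "(\<Sum>i\<in>{i. i < length I \<and> id i = b}. I ! i) \<le> 1 \<and> card {i. i < length I \<and> id i = b} \<le> k"
      proof (cases "b < length I")
        case True
        then have "{i. i < length I \<and> id i = b} = {b}" by auto
        then show ?thesis using True assms(2) k1 nth_mem by fastforce
      next
        case False
        then have e: "{i. i < length I \<and> id i = b} = {}" by auto
        show ?thesis unfolding e by simp
      qed
    qed
  qed simp
  have "\<exists>f. valid_packing k I f \<and> bins_used I f = OPT k I"
    unfolding OPT_def by (rule LeastI_ex) (use ex in blast)
  then obtain f where f: "valid_packing k I f" "bins_used I f = OPT k I" by blast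
  let ?lam = "lambda_seq k"
  have lam: "?lam = (\<Sum>i=1..k. MM k i)" unfolding lambda_seq_def MM_def by simp
  have bin: "(\<Sum>i\<in>{i\<in>{..<n}. f i = b}. wt k (I ! i)) \<le> ?lam" for b
  proof -
    let ?S = "{i\<in>{..<n}. f i = b}"
    have Seq: "?S = {i. i < length I \<and> f i = b}" unfolding n_def by auto
    have v: "sum (\<lambda>i. I ! i) ?S \<le> 1" "card ?S \<le> k" using f(1) unfolding valid_packing_def Seq by auto
    have items: "\<forall>i\<in>?S. 0 < I ! i \<and> I ! i \<le> 1" using assms(2) nth_mem unfolding n_def by auto
    have "(\<Sum>i\<in>?S. wt k (I ! i)) \<le> (\<Sum>i=1..<1 + card ?S. MM k i)"
      using bin_bound[of ?S "card ?S" "\<lambda>i. I ! i" 1 k] v items k1 by simp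
    also have "\<dots> \<le> (\<Sum>i=1..k. MM k i)"
    proof (rule sum_mono2)
      show "{1..<1 + card ?S} \<subseteq> {1..k}" using v by auto
      show "\<And>i. i \<in> {1..k} - {1..<1 + card ?S} \<Longrightarrow> 0 \<le> MM k i"
      proof -
        fix i
        have "0 \<le> 1 / real k" by simp
        then show "0 \<le> MM k i" using MM_ge[of k i] by linarith
      qed
    qed simp
    finally show ?thesis using lam by simp
  qed
  have "sum_list (map (wt k) I) = (\<Sum>i\<in>{..<n}. wt k (I ! i))"
    unfolding n_def by (simp add: sum_list_sum_nth atLeast0LessThan)
  also have "\<dots> = (\<Sum>b\<in>f ` {..<n}. \<Sum>i\<in>{i\<in>{..<n}. f i = b}. wt k (I ! i))"
    by (rule sum.image_gen) simp
  also have "\<dots> \<le> (\<Sum>b\<in>f ` {..<n}. ?lam)" using bin by (intro sum_mono) auto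
  also have "\<dots> = ?lam * real (OPT k I)" using f(2) unfolding bins_used_def n_def by simp
  finally have "sum_list (map (wt k) I) \<le> ?lam * real (OPT k I)" .
  then show ?thesis using nfd_bound[OF k1 assms(2)] by simp
qed

end
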